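(* Let $x,y\in V(D^+)$ with $y\prec x$. Then either $I_s(x)\preceq y$ or $y\prec I_s(x)$. Similarly, either $I_t(y)\preceq x$ or $x\prec I_t(y)$.
   Context: $G=(V,E,w)$ is a simple, connected, undirected graph with positive edge lengths, $s,t\in V$, and $d(\cdot,\cdot)$ is the shortest path distance in $G$; $d_s(v)=d(s,v)$, $d_t(v)=d(v,t)$. $D$ is the union of all shortest $st$-paths of $G$, and $D^+$ is the directed acyclic graph obtained from $D$ by orienting every edge toward $t$ (edge $\{u,v\}$ becomes $(u,v)$ when $d_s(v)=d_s(u)+w(u,v)$). For $x,y\in V(D^+)$, $x\prec y$ means $x$ is an ancestor of $y$ in $D^+$ (there is a directed path of positive length from $x$ to $y$; a vertex is not its own ancestor), and $x\preceq y$ means $x\prec y$ or $x=y$. For $x\neq s$, a vertex $v$ is an $s$-dominator of $x$ if $v\neq x$ and every directed path from $s$ to $x$ in $D^+$ contains $v$; the $s$-immediate-dominator $I_s(x)$ is the $s$-dominator of $x$ such that every other $s$-dominator of $x$ is an $s$-dominator of $I_s(x)$ (the $s$-dominator closest to $x$). Symmetrically, for $x\neq t$, $v\neq x$ is a $t$-dominator of $x$ if every directed path from $x$ to $t$ in $D^+$ contains $v$, and $I_t(x)$ is the $t$-dominator of $x$ closest to $x$. *)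

theory Defs
  imports Complex_Main
begin

definition walk :: "'a set \<Rightarrow> 'a set set \<Rightarrow> 'a list \<Rightarrow> bool" where
  "walk V E p \<longleftrightarrow> p \<noteq> [] \<and> set p \<subseteq> V \<and>
     (\<forall>i. Suc i < length p \<longrightarrow> {p ! i, p ! Suc i} \<in> E)"

definition walk_weight :: "('a set \<Rightarrow> real) \<Rightarrow> 'a list \<Rightarrow> real" where
  "walk_weight w p = (\<Sum>i<length p - 1. w {p ! i, p ! Suc i})"

definition wgraph :: "'a set \<Rightarrow> 'a set set \<Rightarrow> ('a set \<Rightarrow> real) \<Rightarrow> bool" where
  "wgraph V E w \<longleftrightarrow> finite V \<and> (\<forall>e\<in>E. e \<subseteq> V \<and> card e = 2) \<and> (\<forall>e\<in>E. w e > 0)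
     \<and> (\<forall>u\<in>V. \<forall>v\<in>V. \<exists>p. walk V E p \<and> hd p = u \<and> last p = v)"

definition dist :: "'a set \<Rightarrow> 'a set set \<Rightarrow> ('a set \<Rightarrow> real) \<Rightarrow> 'a \<Rightarrow> 'a \<Rightarrow> real" where
  "dist V E w u v = Inf (walk_weight w ` {p. walk V E p \<and> hd p = u \<and> last p = v})"

definition shortest_path ::
  "'a set \<Rightarrow> 'a set set \<Rightarrow> ('a set \<Rightarrow> real) \<Rightarrow> 'a \<Rightarrow> 'a \<Rightarrow> 'a list \<Rightarrow> bool" where
  "shortest_path V E w u v p \<longleftrightarrow> walk V E p \<and> hd p = u \<and> last p = v
     \<and> walk_weight w p = dist V E w u v"

definition DV :: "'a set \<Rightarrow> 'a set set \<Rightarrow> ('a set \<Rightarrow> real) \<Rightarrow> 'a \<Rightarrow> 'a \<Rightarrow> 'a set" where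
  "DV V E w s t = (\<Union>p\<in>{p. shortest_path V E w s t p}. set p)"

definition DE :: "'a set \<Rightarrow> 'a set set \<Rightarrow> ('a set \<Rightarrow> real) \<Rightarrow> 'a \<Rightarrow> 'a \<Rightarrow> 'a set set" where
  "DE V E w s t = {{p ! i, p ! Suc i} | p i. shortest_path V E w s t p \<and> Suc i < length p}"

text \<open>Arcs of D+: edges of D oriented toward t.\<close>
definition Darcs :: "'a set \<Rightarrow> 'a set set \<Rightarrow> ('a set \<Rightarrow> real) \<Rightarrow> 'a \<Rightarrow> 'a \<Rightarrow> ('a \<times> 'a) set" where
  "Darcs V E w s t = {(u, v). {u, v} \<in> DE V E w s t \<and> dist V E w s v = dist V E w s u + w {u, v}}"

text \<open>x \<prec> y: x is an ancestor of y in D+ (directed path of positive length).\<close>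
definition anc :: "'a set \<Rightarrow> 'a set set \<Rightarrow> ('a set \<Rightarrow> real) \<Rightarrow> 'a \<Rightarrow> 'a \<Rightarrow> 'a \<Rightarrow> 'a \<Rightarrow> bool" where
  "anc V E w s t x y \<longleftrightarrow> (x, y) \<in> (Darcs V E w s t)\<^sup>+"

definition dpath :: "('a \<times> 'a) set \<Rightarrow> 'a list \<Rightarrow> bool" where
  "dpath A p \<longleftrightarrow> p \<noteq> [] \<and> (\<forall>i. Suc i < length p \<longrightarrow> (p ! i, p ! Suc i) \<in> A)"

definition s_dom :: "'a set \<Rightarrow> 'a set set \<Rightarrow> ('a set \<Rightarrow> real) \<Rightarrow> 'a \<Rightarrow> 'a \<Rightarrow> 'a \<Rightarrow> 'a \<Rightarrow> bool" where
  "s_dom V E w s t v x \<longleftrightarrow> v \<noteq> x \<and>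
     (\<forall>p. dpath (Darcs V E w s t) p \<and> hd p = s \<and> last p = x \<longrightarrow> v \<in> set p)"

definition t_dom :: "'a set \<Rightarrow> 'a set set \<Rightarrow> ('a set \<Rightarrow> real) \<Rightarrow> 'a \<Rightarrow> 'a \<Rightarrow> 'a \<Rightarrow> 'a \<Rightarrow> bool" where
  "t_dom V E w s t v x \<longleftrightarrow> v \<noteq> x \<and>
     (\<forall>p. dpath (Darcs V E w s t) p \<and> hd p = x \<and> last p = t \<longrightarrow> v \<in> set p)"

definition I_s :: "'a set \<Rightarrow> 'a set set \<Rightarrow> ('a set \<Rightarrow> real) \<Rightarrow> 'a \<Rightarrow> 'a \<Rightarrow> 'a \<Rightarrow> 'a" where
  "I_s V E w s t x = (THE v. s_dom V E w s t v x \<and>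
     (\<forall>u. s_dom V E w s t u x \<and> u \<noteq> v \<longrightarrow> s_dom V E w s t u v))"

definition I_t :: "'a set \<Rightarrow> 'a set set \<Rightarrow> ('a set \<Rightarrow> real) \<Rightarrow> 'a \<Rightarrow> 'a \<Rightarrow> 'a \<Rightarrow> 'a" where
  "I_t V E w s t x = (THE v. t_dom V E w s t v x \<and>
     (\<forall>u. t_dom V E w s t u x \<and> u \<noteq> v \<longrightarrow> t_dom V E w s t u v))"

end

theory Submission
  imports Defs
begin

lemma consec_Cons2:
  "(\<forall>i. Suc i < length (a#b#xs) \<longrightarrow> P ((a#b#xs)!i) ((a#b#xs)!Suc i)) \<longleftrightarrow>
   P a b \<and> (\<forall>i. Suc i < length (b#xs) \<longrightarrow> P ((b#xs)!i) ((b#xs)!Suc i))"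
proof
  assume L: "\<forall>i. Suc i < length (a#b#xs) \<longrightarrow> P ((a#b#xs)!i) ((a#b#xs)!Suc i)"
  show "P a b \<and> (\<forall>i. Suc i < length (b#xs) \<longrightarrow> P ((b#xs)!i) ((b#xs)!Suc i))"
  proof
    show "P a b" using L[rule_format, of 0] by simp
    show "\<forall>i. Suc i < length (b#xs) \<longrightarrow> P ((b#xs)!i) ((b#xs)!Suc i)"
    proof (intro allI impI)
      fix i assume "Suc i < length (b#xs)"
      then show "P ((b#xs)!i) ((b#xs)!Suc i)" using L[rule_format, of "Suc i"] by simp
    qed
  qed
next
  assume R: "P a b \<and> (\<forall>i. Suc i < length (b#xs) \<longrightarrow> P ((b#xs)!i) ((b#xs)!Suc i))"
  show "\<forall>i. Suc i < length (a#b#xs) \<longrightarrow> P ((a#b#xs)!i) ((a#b#xs)!Suc i)"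
  proof (intro allI impI)
    fix i assume "Suc i < length (a#b#xs)"
    then show "P ((a#b#xs)!i) ((a#b#xs)!Suc i)" using R by (cases i) auto
  qed
qed

lemma walk_Cons2: "walk V E (a#b#xs) \<longleftrightarrow> a \<in> V \<and> {a,b} \<in> E \<and> walk V E (b#xs)"
  unfolding walk_def using consec_Cons2[where P="\<lambda>u v. {u,v} \<in> E" and a=a and b=b and xs=xs] by auto
lemma walk_single: "walk V E [a] \<longleftrightarrow> a \<in> V"
  unfolding walk_def by auto
lemma walk_hd: "walk V E (a#xs) \<Longrightarrow> a \<in> V" unfolding walk_def by auto

lemma walk_append: "walk V E (xs @ y # ys) \<longleftrightarrow> walk V E (xs @ [y]) \<and> walk V E (y # ys)"
proof (induction xs)
  case Nil then show ?case by (auto simp: walk_single dest: walk_hd)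
next
  case (Cons x xs) then show ?case
    by (cases xs) (auto simp: walk_Cons2 walk_single dest: walk_hd)
qed

lemma ww_Cons2: "walk_weight w (a#b#xs) = w {a,b} + walk_weight w (b#xs)"
  unfolding walk_weight_def by (simp add: sum.lessThan_Suc_shift del: sum.lessThan_Suc)
lemma ww_single: "walk_weight w [a] = 0" unfolding walk_weight_def by simp
lemma ww_append: "walk_weight w (xs @ y # ys) = walk_weight w (xs @ [y]) + walk_weight w (y # ys)"
proof (induction xs)
  case Nil then show ?case by (simp add: ww_single)
next
  case (Cons x xs) then show ?case by (cases xs) (auto simp: ww_Cons2 ww_single)
qed

lemma ww_nonneg: assumes G: "wgraph V E w" and "walk V E p" shows "walk_weight w p \<ge> 0"
  unfolding walk_weight_def
proof (rule sum_nonneg)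
  fix i assume "i \<in> {..<length p - 1}"
  then have "{p!i, p!Suc i} \<in> E" using assms(2) unfolding walk_def by auto
  then show "w {p!i, p!Suc i} \<ge> 0" using G unfolding wgraph_def by force
qed

lemma bdd_ww: "wgraph V E w \<Longrightarrow> bdd_below (walk_weight w ` {p. walk V E p \<and> hd p = u \<and> last p = v})"
  by (rule bdd_belowI[of _ 0]) (auto intro: ww_nonneg)

lemma dist_le: "wgraph V E w \<Longrightarrow> walk V E p \<Longrightarrow> hd p = u \<Longrightarrow> last p = v \<Longrightarrow> dist V E w u v \<le> walk_weight w p"
  unfolding dist_def using bdd_ww[of V E w u v] by (intro cInf_lower) auto

lemma sp_prefix:
  assumes G: "wgraph V E w" and sp: "shortest_path V E w s t (xs @ y # ys)"
  shows "dist V E w s y = walk_weight w (xs @ [y])"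
proof -
  let ?p = "xs @ y # ys"
  have wp: "walk V E ?p" and hp: "hd ?p = s" and lp: "last ?p = t" and dp: "walk_weight w ?p = dist V E w s t"
    using sp unfolding shortest_path_def by auto
  have w1: "walk V E (xs @ [y])" and w2: "walk V E (y # ys)" using wp walk_append[of V E xs y ys] by auto
  have h1: "hd (xs @ [y]) = s" using hp by (cases xs) auto
  have l2: "last (y # ys) = t" using lp by simp
  show ?thesis unfolding dist_def
  proof (rule cInf_eq_minimum)
    show "walk_weight w (xs @ [y]) \<in> walk_weight w ` {p. walk V E p \<and> hd p = s \<and> last p = y}"
      using w1 h1 by auto
  next
    fix z assume "z \<in> walk_weight w ` {p. walk V E p \<and> hd p = s \<and> last p = y}"
    then obtain q where q: "walk V E q" "hd q = s" "last q = y" and z: "z = walk_weight w q" by auto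
    have qne: "q \<noteq> []" using q(1) unfolding walk_def by auto
    then have qeq: "q = butlast q @ [y]" using q(3) by (metis append_butlast_last_id)
    have wq: "walk V E (butlast q @ y # ys)" using walk_append[of V E "butlast q" y ys] q(1) qeq w2 by auto
    have hq: "hd (butlast q @ y # ys) = s"
    proof (cases "butlast q")
      case Nil then show ?thesis using qeq q(2) by (metis append_Nil list.sel(1))
    next
      case (Cons c cs) then show ?thesis using qeq q(2) by (metis append_Cons list.sel(1))
    qed
    have lq: "last (butlast q @ y # ys) = t" using l2 by simp
    have "dist V E w s t \<le> walk_weight w (butlast q @ y # ys)"
      by (rule dist_le[OF G wq hq lq])
    also have "\<dots> = walk_weight w q + walk_weight w (y # ys)"
      using ww_append[of w "butlast q" y ys] qeq by simp
    finally have "dist V E w s t \<le> walk_weight w q + walk_weight w (y # ys)" .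
    moreover have "dist V E w s t = walk_weight w (xs @ [y]) + walk_weight w (y # ys)"
      using dp ww_append[of w xs y ys] by simp
    ultimately show "walk_weight w (xs @ [y]) \<le> z" using z by simp
  qed
qed


lemma dpath_Cons2: "dpath A (a#b#xs) \<longleftrightarrow> (a,b) \<in> A \<and> dpath A (b#xs)"
  unfolding dpath_def using consec_Cons2[where P="\<lambda>u v. (u,v) \<in> A" and a=a and b=b and xs=xs] by auto
lemma dpath_single: "dpath A [a]" unfolding dpath_def by auto
lemma dpath_ne: "dpath A p \<Longrightarrow> p \<noteq> []" unfolding dpath_def by auto

lemma dpath_append: "dpath A (xs @ y # ys) \<longleftrightarrow> dpath A (xs @ [y]) \<and> dpath A (y # ys)"
proof (induction xs)
  case Nil then show ?case by (auto simp: dpath_single)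
next
  case (Cons x xs) then show ?case
    by (cases xs) (auto simp: dpath_Cons2 dpath_single)
qed

lemma dpath_rtrancl: "dpath A p \<Longrightarrow> (hd p, last p) \<in> A\<^sup>*"
proof (induction p)
  case Nil then show ?case by (simp add: dpath_def)
next
  case (Cons a p) then show ?case
    by (cases p) (auto simp: dpath_Cons2 intro: converse_rtrancl_into_rtrancl)
qed

lemma dpath_mem: assumes "dpath A p" "v \<in> set p"
  shows "(hd p, v) \<in> A\<^sup>* \<and> (v, last p) \<in> A\<^sup>*"
proof -
  obtain xs ys where p: "p = xs @ v # ys" using assms(2) by (metis split_list)
  have 1: "dpath A (xs @ [v])" "dpath A (v # ys)" using assms(1) p dpath_append[of A xs v ys] by auto
  have "hd (xs @ [v]) = hd p" using p by (cases xs) auto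
  moreover have "last (v # ys) = last p" using p by simp
  ultimately show ?thesis using dpath_rtrancl[OF 1(1)] dpath_rtrancl[OF 1(2)] by simp
qed

lemma rtrancl_dpath: "(u,v) \<in> A\<^sup>* \<Longrightarrow> \<exists>p. dpath A p \<and> hd p = u \<and> last p = v"
proof (induction rule: converse_rtrancl_induct)
  case base then show ?case using dpath_single by fastforce
next
  case (step y z)
  then obtain p where p: "dpath A p" "hd p = z" "last p = v" by auto
  then obtain q where q: "p = z # q" using dpath_ne by (metis list.exhaust list.sel(1))
  have "dpath A (y # p)" using p q step(1) by (simp add: dpath_Cons2)
  moreover have "last (y # p) = v" using p q by simp
  ultimately show ?case by fastforce
qed

lemma dpath_join: assumes "dpath A p" "dpath A q" "last p = hd q"
  shows "\<exists>c. dpath A c \<and> hd c = hd p \<and> last c = last q \<and> set c = set p \<union> set q"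
proof -
  have pe: "p = butlast p @ [hd q]" using assms(1,3) dpath_ne by (metis append_butlast_last_id)
  have qe: "q = hd q # tl q" using assms(2) dpath_ne by (metis list.collapse)
  have "dpath A (butlast p @ hd q # tl q)" using dpath_append[of A "butlast p" "hd q" "tl q"] pe qe assms by auto
  moreover have "hd (butlast p @ hd q # tl q) = hd p"
  proof -
    have "hd (butlast p @ hd q # tl q) = hd (butlast p @ [hd q])" by (simp add: hd_append)
    then show ?thesis by (metis pe)
  qed
  moreover have "last (butlast p @ hd q # tl q) = last q" using qe by (metis last_appendR list.distinct(1))
  moreover have "set (butlast p @ hd q # tl q) = set p \<union> set q"
  proof -
    have s1: "set p = set (butlast p) \<union> {hd q}" using arg_cong[OF pe, of set] by simp
    have s2: "set q = insert (hd q) (set (tl q))" using arg_cong[OF qe, of set] by simp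
    show ?thesis using s1 s2 by auto
  qed
  ultimately show ?thesis by blast
qed

lemma dpath_rev: assumes "dpath A p" shows "dpath (A\<inverse>) (rev p)"
  unfolding dpath_def
proof (intro conjI allI impI)
  show "rev p \<noteq> []" using assms dpath_ne by auto
  fix i assume i: "Suc i < length (rev p)"
  define j where "j = length p - Suc (Suc i)"
  have j: "Suc j < length p" "Suc j = length p - Suc i" using i unfolding j_def by auto
  have "(p!j, p!Suc j) \<in> A" using assms j(1) unfolding dpath_def by auto
  moreover have "rev p ! i = p ! Suc j" using i j by (simp add: rev_nth)
  moreover have "rev p ! Suc i = p ! j" using i unfolding j_def by (simp add: rev_nth)
  ultimately show "(rev p ! i, rev p ! Suc i) \<in> A\<inverse>" by simp
qed

definition gdom :: "('a \<times> 'a) set \<Rightarrow> 'a \<Rightarrow> 'a \<Rightarrow> 'a \<Rightarrow> bool" where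
  "gdom A r v x \<longleftrightarrow> v \<noteq> x \<and> (\<forall>p. dpath A p \<and> hd p = r \<and> last p = x \<longrightarrow> v \<in> set p)"

definition Idom :: "('a \<times> 'a) set \<Rightarrow> 'a \<Rightarrow> 'a \<Rightarrow> 'a" where
  "Idom A r x = (THE v. gdom A r v x \<and> (\<forall>u. gdom A r u x \<and> u \<noteq> v \<longrightarrow> gdom A r u v))"

locale pot =
  fixes A :: "('a \<times> 'a) set" and f :: "'a \<Rightarrow> real"
  assumes mono: "(u,v) \<in> A \<Longrightarrow> f u < f v"
begin

lemma trancl_less: "(u,v) \<in> A\<^sup>+ \<Longrightarrow> f u < f v"
proof (induction rule: trancl_induct)
  case (base y) then show ?case by (rule mono)
next
  case (step y z) then show ?case using mono[of y z] by simp
qed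

lemma rtrancl_le: "(u,v) \<in> A\<^sup>* \<Longrightarrow> f u \<le> f v"
  using trancl_less by (auto simp: rtrancl_eq_or_trancl less_imp_le)

lemma dom_K: assumes "(r,x) \<in> A\<^sup>*" "gdom A r v x" shows "(r,v) \<in> A\<^sup>* \<and> (v,x) \<in> A\<^sup>+"
proof -
  obtain p where p: "dpath A p" "hd p = r" "last p = x" using rtrancl_dpath[OF assms(1)] by auto
  then have "v \<in> set p" "v \<noteq> x" using assms(2) unfolding gdom_def by auto
  then show ?thesis using dpath_mem[OF p(1)] p by (auto simp: rtrancl_eq_or_trancl)
qed

lemma dom_split: assumes "gdom A r v x" "(r,a) \<in> A\<^sup>*" "(a,x) \<in> A\<^sup>*"
  shows "(v,a) \<in> A\<^sup>* \<or> (a,v) \<in> A\<^sup>*"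
proof -
  obtain p where p: "dpath A p" "hd p = r" "last p = a" using rtrancl_dpath[OF assms(2)] by auto
  obtain q where q: "dpath A q" "hd q = a" "last q = x" using rtrancl_dpath[OF assms(3)] by auto
  obtain c where c: "dpath A c" "hd c = r" "last c = x" "set c = set p \<union> set q"
    using dpath_join[OF p(1) q(1)] p q by auto
  have "v \<in> set c" using assms(1) c unfolding gdom_def by auto
  then have "v \<in> set p \<or> v \<in> set q" using c(4) by simp
  then show ?thesis
  proof
    assume "v \<in> set p" then have "(v, last p) \<in> A\<^sup>*" using dpath_mem[OF p(1)] by blast
    then show ?thesis using p(3) by simp
  next
    assume "v \<in> set q" then have "(hd q, v) \<in> A\<^sup>*" using dpath_mem[OF q(1)] by blast
    then show ?thesis using q(2) by simp
  qed
qed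

lemma dom_order: assumes rx: "(r,x) \<in> A\<^sup>*" and u: "gdom A r u x" and v: "gdom A r v x" and f: "f u < f v"
  shows "gdom A r u v"
  unfolding gdom_def
proof (intro conjI allI impI)
  show "u \<noteq> v" using f by auto
  fix q assume q: "dpath A q \<and> hd q = r \<and> last q = v"
  have "(v,x) \<in> A\<^sup>*" using dom_K[OF rx v] by (simp add: trancl_into_rtrancl)
  then obtain p where p: "dpath A p" "hd p = v" "last p = x" using rtrancl_dpath[of v x A] by blast
  have q1: "dpath A q" and q2: "hd q = r" and q3: "last q = v" using q by auto
  have lq: "last q = hd p" using q3 p(2) by simp
  obtain c where c: "dpath A c" "hd c = hd q" "last c = last p" "set c = set q \<union> set p"
    using dpath_join[OF q1 p(1) lq] by blast
  have uall: "\<And>p. dpath A p \<Longrightarrow> hd p = r \<Longrightarrow> last p = x \<Longrightarrow> u \<in> set p"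
    using u unfolding gdom_def by blast
  have "u \<in> set c" using uall[OF c(1)] c(2,3) q2 p(3) by simp
  moreover have "u \<notin> set p"
  proof
    assume "u \<in> set p"
    then have "(hd p, u) \<in> A\<^sup>*" using dpath_mem[OF p(1)] by blast
    then have "(v,u) \<in> A\<^sup>*" using p(2) by simp
    then show False using rtrancl_le[of v u] f by simp
  qed
  ultimately show "u \<in> set q" using c(4) by simp
qed

lemma dom_distinct: assumes rx: "(r,x) \<in> A\<^sup>*" and u: "gdom A r u x" and v: "gdom A r v x" and "u \<noteq> v"
  shows "f u \<noteq> f v"
proof -
  have "(u,v) \<in> A\<^sup>* \<or> (v,u) \<in> A\<^sup>*" using dom_split[OF v, of u] dom_K[OF rx u] by (auto simp add: trancl_into_rtrancl)
  then have "(u,v) \<in> A\<^sup>+ \<or> (v,u) \<in> A\<^sup>+" using assms(4) by (auto simp: rtrancl_eq_or_trancl)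
  then show ?thesis using trancl_less[of u v] trancl_less[of v u] by auto
qed

lemma Idom_dom: assumes rx: "(r,x) \<in> A\<^sup>*" and "r \<noteq> x" shows "gdom A r (Idom A r x) x"
proof -
  obtain p where p: "dpath A p" "hd p = r" "last p = x" using rtrancl_dpath[OF rx] by auto
  let ?D = "{v. gdom A r v x}"
  have Dsub: "?D \<subseteq> set p" using p unfolding gdom_def by auto
  then have fin: "finite ?D" using finite_subset by blast
  have "gdom A r r x" unfolding gdom_def using assms(2) dpath_ne hd_in_set by metis
  then have ne: "?D \<noteq> {}" by auto
  have "Max (f ` ?D) \<in> f ` ?D" using fin ne by (intro Max_in) auto
  then obtain m where m: "m \<in> ?D" "f m = Max (f ` ?D)" by auto
  have mx: "\<forall>u\<in>?D. f u \<le> f m" using m fin by auto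
  let ?P = "\<lambda>v. gdom A r v x \<and> (\<forall>u. gdom A r u x \<and> u \<noteq> v \<longrightarrow> gdom A r u v)"
  have Pm: "?P m"
  proof (intro conjI allI impI)
    show "gdom A r m x" using m by auto
    fix u assume u: "gdom A r u x \<and> u \<noteq> m"
    have "f u \<noteq> f m" using dom_distinct[OF rx, of u m] m u by simp
    moreover have "f u \<le> f m" using mx u by simp
    ultimately have "f u < f m" by simp
    then show "gdom A r u m" using dom_order[OF rx, of u m] u m by auto
  qed
  have uniq: "v = m" if Pv: "?P v" for v
  proof (rule ccontr)
    assume "v \<noteq> m"
    then have "gdom A r m v" using Pv m by auto
    moreover have "(r,v) \<in> A\<^sup>*" using dom_K[OF rx] Pv by auto
    ultimately have "(m,v) \<in> A\<^sup>+" using dom_K[of r v m] by simp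
    then have "f m < f v" by (rule trancl_less)
    moreover have "f v \<le> f m" using mx Pv by auto
    ultimately show False by simp
  qed
  have "Idom A r x = m" unfolding Idom_def using Pm uniq by (rule the_equality)
  then show ?thesis using m by auto
qed

lemma main: assumes ry: "(r,y) \<in> A\<^sup>*" and yx: "(y,x) \<in> A\<^sup>+"
  shows "Idom A r x = y \<or> (Idom A r x, y) \<in> A\<^sup>+ \<or> (y, Idom A r x) \<in> A\<^sup>+"
proof -
  have rx: "(r,x) \<in> A\<^sup>*" using ry yx by auto
  have "r \<noteq> x"
  proof
    assume "r = x"
    then have "f y < f r" "f r \<le> f y" using trancl_less[OF yx] rtrancl_le[OF ry] by auto
    then show False by simp
  qed
  then have d: "gdom A r (Idom A r x) x" by (rule Idom_dom[OF rx])
  have "(Idom A r x, y) \<in> A\<^sup>* \<or> (y, Idom A r x) \<in> A\<^sup>*"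
    using dom_split[OF d ry] yx by (simp add: trancl_into_rtrancl)
  then show ?thesis by (auto simp: rtrancl_eq_or_trancl)
qed

end


lemma sp_dpath: assumes G: "wgraph V E w" and sp: "shortest_path V E w s t p"
  shows "dpath (Darcs V E w s t) p"
  unfolding dpath_def
proof (intro conjI allI impI)
  show "p \<noteq> []" using sp unfolding shortest_path_def walk_def by auto
  fix i assume i: "Suc i < length p"
  define a where "a = p ! i"
  define b where "b = p ! Suc i"
  define zs where "zs = drop (Suc (Suc i)) p"
  have peq: "p = take i p @ a # b # zs"
    unfolding a_def b_def zs_def using i
    by (metis Cons_nth_drop_Suc Suc_lessD id_take_nth_drop)
  have sp1: "shortest_path V E w s t (take i p @ a # (b # zs))" using sp peq by metis
  have sp2: "shortest_path V E w s t ((take i p @ [a]) @ b # zs)" using sp1 by simp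
  have da: "dist V E w s a = walk_weight w (take i p @ [a])" by (rule sp_prefix[OF G sp1])
  have db: "dist V E w s b = walk_weight w ((take i p @ [a]) @ [b])" by (rule sp_prefix[OF G sp2])
  have "walk_weight w ((take i p @ [a]) @ [b]) = walk_weight w (take i p @ a # [b])" by simp
  also have "\<dots> = walk_weight w (take i p @ [a]) + walk_weight w [a, b]" by (rule ww_append)
  also have "\<dots> = walk_weight w (take i p @ [a]) + w {a, b}" by (simp add: ww_Cons2 ww_single)
  finally have deq: "dist V E w s b = dist V E w s a + w {a,b}" using da db by simp
  have "{a,b} \<in> DE V E w s t" unfolding DE_def a_def b_def using sp i by blast
  then show "(p ! i, p ! Suc i) \<in> Darcs V E w s t" unfolding Darcs_def using deq a_def b_def by simp
qed

lemma arc_less: assumes G: "wgraph V E w" and uv: "(u,v) \<in> Darcs V E w s t"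
  shows "dist V E w s u < dist V E w s v"
proof -
  have de: "{u,v} \<in> DE V E w s t" and eq: "dist V E w s v = dist V E w s u + w {u,v}"
    using uv unfolding Darcs_def by auto
  obtain p i where "{u,v} = {p!i, p!Suc i}" "shortest_path V E w s t p" "Suc i < length p"
    using de unfolding DE_def by blast
  then have "{u,v} \<in> E" unfolding shortest_path_def walk_def by auto
  then have "w {u,v} > 0" using G unfolding wgraph_def by blast
  then show ?thesis using eq by simp
qed

lemma I_s_eq: "I_s V E w s t = Idom (Darcs V E w s t) s"
proof -
  have "s_dom V E w s t = gdom (Darcs V E w s t) s"
    by (simp add: fun_eq_iff s_dom_def gdom_def)
  then show ?thesis by (simp add: fun_eq_iff I_s_def Idom_def)
qed

lemma t_dom_eq: "t_dom V E w s t = gdom ((Darcs V E w s t)\<inverse>) t"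
proof -
  let ?A = "Darcs V E w s t"
  have "t_dom V E w s t v x = gdom (?A\<inverse>) t v x" for v x
  proof -
    have "(\<forall>p. dpath ?A p \<and> hd p = x \<and> last p = t \<longrightarrow> v \<in> set p) \<longleftrightarrow>
          (\<forall>q. dpath (?A\<inverse>) q \<and> hd q = t \<and> last q = x \<longrightarrow> v \<in> set q)"
    proof
      assume L: "\<forall>p. dpath ?A p \<and> hd p = x \<and> last p = t \<longrightarrow> v \<in> set p"
      show "\<forall>q. dpath (?A\<inverse>) q \<and> hd q = t \<and> last q = x \<longrightarrow> v \<in> set q"
      proof (intro allI impI)
        fix q assume q: "dpath (?A\<inverse>) q \<and> hd q = t \<and> last q = x"
        have "dpath ?A (rev q)" using dpath_rev[of "?A\<inverse>" q] q by simp
        moreover have "hd (rev q) = x" "last (rev q) = t" using q by (simp_all add: hd_rev last_rev)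
        ultimately have "v \<in> set (rev q)" using L by blast
        then show "v \<in> set q" by simp
      qed
    next
      assume R: "\<forall>q. dpath (?A\<inverse>) q \<and> hd q = t \<and> last q = x \<longrightarrow> v \<in> set q"
      show "\<forall>p. dpath ?A p \<and> hd p = x \<and> last p = t \<longrightarrow> v \<in> set p"
      proof (intro allI impI)
        fix q assume q: "dpath ?A q \<and> hd q = x \<and> last q = t"
        have "dpath (?A\<inverse>) (rev q)" using dpath_rev[of "?A" q] q by simp
        moreover have "hd (rev q) = t" "last (rev q) = x" using q by (simp_all add: hd_rev last_rev)
        ultimately have "v \<in> set (rev q)" using R by blast
        then show "v \<in> set q" by simp
      qed
    qed
    then show ?thesis unfolding t_dom_def gdom_def by simp
  qed
  then show ?thesis by (simp add: fun_eq_iff)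
qed

lemma I_t_eq: "I_t V E w s t = Idom ((Darcs V E w s t)\<inverse>) t"
  by (simp add: fun_eq_iff I_t_def Idom_def t_dom_eq)

lemma DV_reach: assumes G: "wgraph V E w" and x: "x \<in> DV V E w s t"
  shows "(s,x) \<in> (Darcs V E w s t)\<^sup>* \<and> (x,t) \<in> (Darcs V E w s t)\<^sup>*"
proof -
  obtain p where p: "shortest_path V E w s t p" "x \<in> set p" using x unfolding DV_def by blast
  have d: "dpath (Darcs V E w s t) p" by (rule sp_dpath[OF G p(1)])
  have "hd p = s" "last p = t" using p(1) unfolding shortest_path_def by auto
  then show ?thesis using dpath_mem[OF d p(2)] by simp
qed

theorem lemma2:
  fixes V :: "'a set" and E :: "'a set set" and w :: "'a set \<Rightarrow> real" and s t x y :: 'a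
  assumes "wgraph V E w" and "s \<in> V" and "t \<in> V"
    and "x \<in> DV V E w s t" and "y \<in> DV V E w s t"
    and "anc V E w s t y x"
  shows "((I_s V E w s t x = y \<or> anc V E w s t (I_s V E w s t x) y) \<or> anc V E w s t y (I_s V E w s t x))
    \<and> ((I_t V E w s t y = x \<or> anc V E w s t (I_t V E w s t y) x) \<or> anc V E w s t x (I_t V E w s t y))"
proof -
  let ?A = "Darcs V E w s t"
  let ?f = "dist V E w s"
  interpret P1: pot ?A ?f by unfold_locales (rule arc_less[OF assms(1)])
  interpret P2: pot "?A\<inverse>" "\<lambda>v. - ?f v" by unfold_locales (simp add: arc_less[OF assms(1)])
  have yx: "(y,x) \<in> ?A\<^sup>+" using assms(6) unfolding anc_def by simp
  have rx: "(s,x) \<in> ?A\<^sup>*" "(x,t) \<in> ?A\<^sup>*" using DV_reach[OF assms(1,4)] by auto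
  have ry: "(s,y) \<in> ?A\<^sup>*" "(y,t) \<in> ?A\<^sup>*" using DV_reach[OF assms(1,5)] by auto
  have 1: "Idom ?A s x = y \<or> (Idom ?A s x, y) \<in> ?A\<^sup>+ \<or> (y, Idom ?A s x) \<in> ?A\<^sup>+"
    by (rule P1.main[OF ry(1) yx])
  have tx: "(t,x) \<in> (?A\<inverse>)\<^sup>*" using rx(2) by (simp add: rtrancl_converse)
  have xy: "(x,y) \<in> (?A\<inverse>)\<^sup>+" using yx by (simp add: trancl_converse)
  have 2: "Idom (?A\<inverse>) t y = x \<or> (Idom (?A\<inverse>) t y, x) \<in> (?A\<inverse>)\<^sup>+ \<or> (x, Idom (?A\<inverse>) t y) \<in> (?A\<inverse>)\<^sup>+"
    by (rule P2.main[OF tx xy])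
  show ?thesis using 1 2 unfolding anc_def I_s_eq I_t_eq by (auto simp: trancl_converse)
qed

end
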